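(* Let $\mathcal H$ be a hypothesis class, and let $S$ be a sample of size $n>1$ that is not realizable by $\mathcal H$ but every proper subsample of $S$ is realizable by $\mathcal H$. Then there exist two functions $F_a,F_b$ mapping $n$-bit strings $x,y\in\{0,1\}^n$ to subsamples of $S$ such that $x\cap y=\emptyset$ (identifying bit strings with subsets of $[n]$) if and only if the joint sample $(F_a(x),F_b(y))$ is not realizable by $\mathcal H$.
   Context: A sample is a finite sequence of examples $(x,y)\in\mathcal X\times\{\pm1\}$; a subsample of $S$ is a sample all of whose examples appear in $S$; $(S_1,S_2)$ denotes concatenation. A sample is realizable by $\mathcal H$ if some $h\in\mathcal H$ agrees with all its examples. *)

theory Defs
  imports Main "HOL-Library.Sublist"
begin

text \<open>Examples are pairs (x, y) with label y :: bool (True = +1, False = -1).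
  A sample is a finite sequence (list) of examples; hypotheses are maps X -> labels.\<close>

definition realizable :: "('x \<Rightarrow> bool) set \<Rightarrow> ('x \<times> bool) list \<Rightarrow> bool" where
  "realizable H S \<longleftrightarrow> (\<exists>h\<in>H. \<forall>(x, y)\<in>set S. h x = y)"

definition subsample :: "('x \<times> bool) list \<Rightarrow> ('x \<times> bool) list \<Rightarrow> bool" where
  "subsample T S \<longleftrightarrow> set T \<subseteq> set S"

definition proper_subsample :: "('x \<times> bool) list \<Rightarrow> ('x \<times> bool) list \<Rightarrow> bool" where
  "proper_subsample T S \<longleftrightarrow> subseq T S \<and> T \<noteq> S"

text \<open>Bit strings of length n as bool lists; disjointness of the associated subsets of [n].\<close>
definition bits_disjoint :: "bool list \<Rightarrow> bool list \<Rightarrow> bool" where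
  "bits_disjoint u v \<longleftrightarrow> (\<forall>i < min (length u) (length v). \<not> (u ! i \<and> v ! i))"

end

theory Submission
  imports Defs
begin

lemma realizable_mono: "set A \<subseteq> set B \<Longrightarrow> realizable H B \<Longrightarrow> realizable H A"
  unfolding realizable_def by blast

theorem lemma5:
  fixes H :: "('x \<Rightarrow> bool) set" and S :: "('x \<times> bool) list" and n :: nat
  assumes "length S = n" and "n > 1"
    and "\<not> realizable H S"
    and "\<And>T. proper_subsample T S \<Longrightarrow> realizable H T"
  shows "\<exists>Fa Fb :: bool list \<Rightarrow> ('x \<times> bool) list.
           (\<forall>u. length u = n \<longrightarrow> subsample (Fa u) S \<and> subsample (Fb u) S) \<and>
           (\<forall>u v. length u = n \<longrightarrow> length v = n \<longrightarrow>
              (bits_disjoint u v \<longleftrightarrow> \<not> realizable H (Fa u @ Fb v)))"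
proof (intro exI conjI allI impI)
  let ?F = "\<lambda>u. nths S {i. \<not> u ! i}"
  fix u :: "bool list" assume "length u = n"
  show "subsample (?F u) S" "subsample (?F u) S"
    unfolding subsample_def by (simp_all add: set_nths_subset)
next
  let ?F = "\<lambda>u. nths S {i. \<not> u ! i}"
  fix u v :: "bool list" assume lu: "length u = n" and lv: "length v = n"
  have setF: "set (?F u @ ?F v) = {S!i |i. i < n \<and> (\<not> u!i \<or> \<not> v!i)}"
    using assms(1) by (auto simp: set_nths)
  show "bits_disjoint u v \<longleftrightarrow> \<not> realizable H (?F u @ ?F v)"
  proof
    assume d: "bits_disjoint u v"
    have "set S \<subseteq> set (?F u @ ?F v)"
    proof
      fix x assume "x \<in> set S"
      then obtain i where "i < n" "x = S!i" using assms(1) by (auto simp: in_set_conv_nth)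
      then show "x \<in> set (?F u @ ?F v)" using d lu lv unfolding setF bits_disjoint_def by auto
    qed
    then show "\<not> realizable H (?F u @ ?F v)" using assms(3) realizable_mono by blast
  next
    assume nr: "\<not> realizable H (?F u @ ?F v)"
    show "bits_disjoint u v"
    proof (rule ccontr)
      assume "\<not> bits_disjoint u v"
      then obtain i where i: "i < n" "u!i" "v!i" using lu lv unfolding bits_disjoint_def by auto
      let ?T = "nths S (- {i})"
      have "subseq ?T S" using subseq_conv_nths by blast
      moreover have "length ?T \<noteq> length S"
      proof -
        have "{j. j < length S \<and> j \<in> - {i}} = {0..<n} - {i}" using assms(1) by auto
        then have "card {j. j < length S \<and> j \<in> - {i}} = n - 1" using i by simp
        then show ?thesis using assms(1,2) by (simp add: length_nths)
      qed
      ultimately have "proper_subsample ?T S" unfolding proper_subsample_def by auto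
      then have r: "realizable H ?T" by (rule assms(4))
      have "set (?F u @ ?F v) \<subseteq> set ?T"
        unfolding setF using assms(1) i by (auto simp: set_nths)
      then show False using r nr realizable_mono by blast
    qed
  qed
qed

end
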